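(* Let $a\in\mathbb{C}$ and $\varphi(z)=az^2+(1-2a)z+a$, so that $\varphi(1)=1$ and $\varphi'(1)=1$. Then $\varphi$ maps the open unit disk $\mathbb{D}$ into $\mathbb{D}$ if and only if $|a-\tfrac14|\le \tfrac14$. Moreover, if $|a-\tfrac14|\le\tfrac14$ and $a\neq 0$, then the only points $\zeta\in\partial\mathbb{D}$ with $|\varphi(\zeta)|=1$ are $\zeta=1$ (with $\varphi(1)=1$) and, only in the case $|a-\tfrac14|=\tfrac14$, the point $\zeta=-1$ (with $\varphi(-1)=4a-1$); every other point of $\partial\mathbb{D}$ is mapped into $\mathbb{D}$.
   Context: $\mathbb{D}=\{z\in\mathbb{C}:|z|<1\}$ is the open unit disk and $\partial\mathbb{D}$ the unit circle. $\varphi$ is a polynomial, hence analytic on a neighborhood of $\overline{\mathbb{D}}$. *)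

theory Defs
  imports "HOL-Analysis.Analysis"
begin

definition phi :: "complex \<Rightarrow> complex \<Rightarrow> complex" where
  "phi a z = a * z^2 + (1 - 2*a) * z + a"

end

theory Submission
  imports Defs "HOL-Complex_Analysis.Complex_Analysis"
begin

lemma phi_sphere:
  assumes "cmod z = 1"
  shows "phi a z = z * (1 - a * of_real (2 - 2 * Re z))"
proof -
  have zc: "z * cnj z = 1" using assms by (metis complex_norm_square mult.commute of_real_1 power_one)
  have "phi a z = z + a * (z - 1)^2" unfolding phi_def by (simp add: power2_eq_square algebra_simps)
  also have "(z - 1)^2 = z * (z + cnj z - 2)"
    using zc by (simp add: power2_eq_square algebra_simps)
  also have "z + cnj z - 2 = - of_real (2 - 2 * Re z)" by (simp add: complex_add_cnj)
  finally show ?thesis by (simp add: algebra_simps)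
qed

lemma norm_phi_sphere:
  assumes "cmod z = 1"
  shows "(cmod (phi a z))^2 = (1 - Re a * (2 - 2 * Re z))^2 + (Im a * (2 - 2 * Re z))^2"
proof -
  have "cmod (phi a z) = cmod (1 - a * of_real (2 - 2 * Re z))"
    using assms by (simp add: phi_sphere norm_mult)
  then show ?thesis by (simp add: cmod_power2)
qed

lemma Re_sphere_bounds:
  assumes "cmod z = 1" shows "-1 \<le> Re z" "Re z \<le> 1"
  using abs_Re_le_cmod[of z] assms by auto

lemma aux_sq: fixes R I :: real shows "(R - 1/4)^2 + I^2 - (1/4)^2 = R^2 + I^2 - R/2"
  by (simp add: power2_eq_square algebra_simps)

lemma disk_cond: "cmod (a - 1/4) \<le> 1/4 \<longleftrightarrow> (Re a)^2 + (Im a)^2 \<le> Re a / 2"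
proof -
  have "cmod (a - 1/4) \<le> 1/4 \<longleftrightarrow> (cmod (a - 1/4))^2 \<le> (1/4)^2"
    by (simp add: abs_le_square_iff power2_le_iff_abs_le)
  also have "(cmod (a - 1/4))^2 = (Re a - 1/4)^2 + (Im a)^2" by (simp add: cmod_power2)
  also have "(Re a - 1/4)^2 + (Im a)^2 \<le> (1/4)^2 \<longleftrightarrow> (Re a)^2 + (Im a)^2 \<le> Re a / 2"
    using aux_sq[of "Re a" "Im a"] by linarith
  finally show ?thesis .
qed

lemma disk_eq: "cmod (a - 1/4) = 1/4 \<longleftrightarrow> (Re a)^2 + (Im a)^2 = Re a / 2"
proof -
  have "cmod (a - 1/4) = 1/4 \<longleftrightarrow> (cmod (a - 1/4))^2 = (1/4)^2"
    by (metis norm_ge_zero power2_eq_imp_eq zero_le_divide_1_iff zero_le_numeral)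
  also have "(cmod (a - 1/4))^2 = (Re a - 1/4)^2 + (Im a)^2" by (simp add: cmod_power2)
  also have "(Re a - 1/4)^2 + (Im a)^2 = (1/4)^2 \<longleftrightarrow> (Re a)^2 + (Im a)^2 = Re a / 2"
    using aux_sq[of "Re a" "Im a"] by linarith
  finally show ?thesis .
qed

lemma realA:
  fixes x y t :: real
  assumes "x^2 + y^2 \<le> x/2" "0 \<le> t" "t \<le> 4"
  shows "(1 - x*t)^2 + (y*t)^2 \<le> 1"
proof -
  have x0: "x \<ge> 0" using assms(1) sum_power2_ge_zero[of x y] by linarith
  have "t * (x^2+y^2) \<le> 2 * x"
  proof -
    have "t * (x^2+y^2) \<le> t * (x/2)" by (rule mult_left_mono) (use assms in auto)
    also have "\<dots> \<le> 4 * (x/2)" using assms x0 by (intro mult_right_mono) auto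
    finally show ?thesis by simp
  qed
  hence "t * (t * (x^2+y^2)) \<le> t * (2*x)" using assms by (simp add: mult_left_mono)
  thus ?thesis by (simp add: power2_eq_square algebra_simps)
qed

lemma realB:
  fixes x y t :: real
  assumes "x^2 + y^2 \<le> x/2" "0 \<le> t" "t \<le> 4" "x^2 + y^2 > 0"
  shows "(1 - x*t)^2 + (y*t)^2 = 1 \<longleftrightarrow> t = 0 \<or> (x^2+y^2 = x/2 \<and> t = 4)"
proof
  assume h: "(1 - x*t)^2 + (y*t)^2 = 1"
  hence e: "t * (t * (x^2+y^2) - 2*x) = 0" by (simp add: power2_eq_square algebra_simps)
  show "t = 0 \<or> (x^2+y^2 = x/2 \<and> t = 4)"
  proof (cases "t = 0")
    case False
    hence e2: "t * (x^2+y^2) = 2*x" using e by simp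
    moreover have "4 * (x^2+y^2) \<le> 2 * x" using assms(1) by (simp add: field_simps)
    ultimately have "t * (x^2+y^2) \<ge> 4 * (x^2+y^2)" by linarith
    hence "4 * (x^2+y^2) \<le> t * (x^2+y^2)" by simp
    hence "t \<ge> 4" by (simp only: mult_le_cancel_right_pos[OF assms(4)])
    hence "t = 4" using assms by simp
    thus ?thesis using e2 by simp
  qed simp
next
  assume "t = 0 \<or> (x^2+y^2 = x/2 \<and> t = 4)"
  thus "(1 - x*t)^2 + (y*t)^2 = 1"
    by (auto simp: power2_eq_square algebra_simps)
qed

lemma sphere_Re1: assumes "cmod z = 1" "Re z = 1" shows "z = 1"
proof -
  have "(Re z)^2 + (Im z)^2 = 1" using assms(1) cmod_power2[of z] by simp
  hence "Im z = 0" using assms(2) by simp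
  thus ?thesis using assms(2) by (simp add: complex_eq_iff)
qed

lemma sphere_Rem1: assumes "cmod z = 1" "Re z = -1" shows "z = -1"
proof -
  have "(Re z)^2 + (Im z)^2 = 1" using assms(1) cmod_power2[of z] by simp
  hence "Im z = 0" using assms(2) by simp
  thus ?thesis using assms(2) by (simp add: complex_eq_iff)
qed

lemma aux35: assumes "(c::complex)*3 = 2" "c*5 = 2" shows False
proof -
  have c: "c = 2/3" using assms(1) by (simp add: eq_divide_eq)
  have "(2/3)*5 = (2::complex)" using assms(2) unfolding c .
  thus False by simp
qed

lemma phi_holo: "phi a holomorphic_on S"
  unfolding phi_def by (intro holomorphic_intros)

lemma phi_cont: "continuous_on S (phi a)"
  unfolding phi_def by (intro continuous_intros)

lemma boundary_le:
  assumes "cmod (a - 1/4) \<le> 1/4" "cmod z = 1"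
  shows "cmod (phi a z) \<le> 1"
proof -
  have "(cmod (phi a z))^2 \<le> 1"
    using norm_phi_sphere[OF assms(2)] realA[of "Re a" "Im a" "2 - 2 * Re z"]
      Re_sphere_bounds[OF assms(2)] assms(1) disk_cond by auto
  thus ?thesis by (simp add: power_le_one_iff)
qed

lemma boundary_char:
  assumes h: "cmod (a - 1/4) \<le> 1/4" and a0: "a \<noteq> 0" and z1: "cmod z = 1"
  shows "cmod (phi a z) = 1 \<longleftrightarrow> (z = 1 \<or> (cmod (a - 1/4) = 1/4 \<and> z = -1))"
proof -
  have "Re a \<noteq> 0 \<or> Im a \<noteq> 0" using a0 by (simp add: complex_eq_iff)
  hence pos: "(Re a)^2 + (Im a)^2 > 0" by (simp add: sum_power2_gt_zero_iff)
  have dc: "(Re a)^2 + (Im a)^2 \<le> Re a / 2" using h disk_cond[of a] by simp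
  note rb = Re_sphere_bounds[OF z1]
  have t0: "0 \<le> 2 - 2 * Re z" using rb by linarith
  have t4: "2 - 2 * Re z \<le> 4" using rb by linarith
  have "cmod (phi a z) = 1 \<longleftrightarrow> (cmod (phi a z))^2 = 1"
    by (metis norm_ge_zero power_one power2_eq_imp_eq zero_le_one)
  also have "\<dots> \<longleftrightarrow> (1 - Re a * (2 - 2 * Re z))^2 + (Im a * (2 - 2 * Re z))^2 = 1"
    by (simp only: norm_phi_sphere[OF z1])
  also have "\<dots> \<longleftrightarrow> (2 - 2 * Re z = 0 \<or> ((Re a)^2 + (Im a)^2 = Re a / 2 \<and> 2 - 2 * Re z = 4))"
    by (rule realB[OF dc t0 t4 pos])
  also have "\<dots> \<longleftrightarrow> (Re z = 1 \<or> (cmod (a - 1/4) = 1/4 \<and> Re z = -1))"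
    using disk_eq[of a] by auto
  also have "\<dots> \<longleftrightarrow> (z = 1 \<or> (cmod (a - 1/4) = 1/4 \<and> z = -1))"
    using sphere_Re1[OF z1] sphere_Rem1[OF z1] by auto
  finally show ?thesis .
qed

theorem mainTheorem1:
  fixes a :: complex
  shows "phi a 1 = 1 \<and> deriv (phi a) 1 = 1 \<and> phi a (-1) = 4*a - 1
    \<and> ((phi a ` ball 0 1 \<subseteq> ball 0 1) \<longleftrightarrow> cmod (a - 1/4) \<le> 1/4)
    \<and> (cmod (a - 1/4) \<le> 1/4 \<and> a \<noteq> 0 \<longrightarrow>
        (\<forall>\<zeta>\<in>sphere 0 1. cmod (phi a \<zeta>) = 1 \<longleftrightarrow>
            (\<zeta> = 1 \<or> (cmod (a - 1/4) = 1/4 \<and> \<zeta> = -1)))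
        \<and> (\<forall>\<zeta>\<in>sphere 0 1. \<not> (\<zeta> = 1 \<or> (cmod (a - 1/4) = 1/4 \<and> \<zeta> = -1))
              \<longrightarrow> phi a \<zeta> \<in> ball 0 1))"
proof -
  have p1: "phi a 1 = 1" by (simp add: phi_def)
  have pm1: "phi a (-1) = 4*a - 1" by (simp add: phi_def)
  have "(phi a has_field_derivative (2 * a * 1 + (1 - 2*a))) (at 1)"
    unfolding phi_def[abs_def] by (auto intro!: derivative_eq_intros)
  hence d: "deriv (phi a) 1 = 1" by (simp add: DERIV_imp_deriv)
  have iff: "(phi a ` ball 0 1 \<subseteq> ball 0 1) \<longleftrightarrow> cmod (a - 1/4) \<le> 1/4"
  proof
    assume h: "phi a ` ball 0 1 \<subseteq> ball 0 1"
    have "phi a ` closure (ball 0 1) \<subseteq> cball 0 1"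
      using h by (intro image_closure_subset phi_cont) auto
    moreover have "-1 \<in> closure (ball (0::complex) 1)" by simp
    ultimately have "phi a (-1) \<in> cball 0 1" by blast
    hence "cmod (4*a - 1) \<le> 1" using pm1 by simp
    moreover have "cmod (4*a - 1) = cmod (4 * (a - 1/4))" by (rule arg_cong[where f=cmod]) simp
    moreover have "cmod (4 * (a - 1/4)) = 4 * cmod (a - 1/4)" by (subst norm_mult) simp
    ultimately show "cmod (a - 1/4) \<le> 1/4" by linarith
  next
    assume h: "cmod (a - 1/4) \<le> 1/4"
    show "phi a ` ball 0 1 \<subseteq> ball 0 1"
    proof
      fix w assume "w \<in> phi a ` ball 0 1"
      then obtain z where z: "z \<in> ball 0 1" "w = phi a z" by auto
      have le: "cmod (phi a u) \<le> 1" if "u \<in> ball 0 1" for u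
        by (rule maximum_modulus_frontier[OF phi_holo phi_cont _ _ that])
           (use boundary_le[OF h] in auto)
      have "cmod (phi a z) < 1"
      proof (rule ccontr)
        assume "\<not> cmod (phi a z) < 1"
        hence "cmod (phi a z) = 1" using le z by force
        hence "phi a constant_on ball 0 1"
          by (intro maximum_modulus_principle[OF phi_holo _ _ _ order_refl z(1)])
             (use le in auto)
        then obtain c where c: "\<And>u. u \<in> ball 0 1 \<Longrightarrow> phi a u = c"
          by (auto simp: constant_on_def)
        have "phi a 0 = c" "phi a (1/2) = c" "phi a (-1/2) = c" using c by auto
        have "a = c" using \<open>phi a 0 = c\<close> by (simp add: phi_def)
        moreover have "c*3 = 2" "c*5 = 2" using \<open>phi a (1/2) = c\<close> \<open>phi a (-1/2) = c\<close> calculation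
          by (simp_all add: phi_def field_simps power2_eq_square)
        ultimately show False using aux35 by auto
      qed
      thus "w \<in> ball 0 1" using z by simp
    qed
  qed
  have bd: "cmod (a - 1/4) \<le> 1/4 \<and> a \<noteq> 0 \<longrightarrow>
        (\<forall>\<zeta>\<in>sphere 0 1. cmod (phi a \<zeta>) = 1 \<longleftrightarrow>
            (\<zeta> = 1 \<or> (cmod (a - 1/4) = 1/4 \<and> \<zeta> = -1)))
        \<and> (\<forall>\<zeta>\<in>sphere 0 1. \<not> (\<zeta> = 1 \<or> (cmod (a - 1/4) = 1/4 \<and> \<zeta> = -1))
              \<longrightarrow> phi a \<zeta> \<in> ball 0 1)"
  proof (intro impI conjI ballI)
    fix z :: complex assume h: "cmod (a - 1/4) \<le> 1/4 \<and> a \<noteq> 0" and z: "z \<in> sphere 0 1"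
    show "cmod (phi a z) = 1 \<longleftrightarrow> (z = 1 \<or> (cmod (a - 1/4) = 1/4 \<and> z = -1))"
      using boundary_char[of a z] h z by simp
  next
    fix z :: complex assume h: "cmod (a - 1/4) \<le> 1/4 \<and> a \<noteq> 0" and z: "z \<in> sphere 0 1"
    assume n: "\<not> (z = 1 \<or> (cmod (a - 1/4) = 1/4 \<and> z = -1))"
    have z1: "cmod z = 1" using z by simp
    have "cmod (phi a z) \<noteq> 1" using boundary_char[of a z] h z1 n by blast
    moreover have "cmod (phi a z) \<le> 1" using boundary_le[OF conjunct1[OF h] z1] .
    ultimately show "phi a z \<in> ball 0 1" by simp
  qed
  show ?thesis using p1 d pm1 iff bd by blast
qed

end
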